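(* Let $1<S\le N$, $L$ a band-width vector, $\dot W$ an $L$-admissible matrix, $W_\varepsilon=\mathrm{Id}+\varepsilon\dot W$, $k\in\mathbb N$, $\beta\in\Gamma$, $D_\beta=D_{k,\beta,L}$, $P_{\varepsilon,\beta}=D_\beta W_\varepsilon$. Fix $\ell\in\{1,\dots,N\}$ and $s_\ell$ with $\ell\in B_{s_\ell}$. Suppose that for $0<\varepsilon<\gamma$, $f^{(\ell)}_\varepsilon$ is a unit-norm eigenvector of $P_{\varepsilon,\beta}$ with eigenvalue $\lambda^{(\ell)}_\varepsilon$, that $\lambda^{(\ell)}_\varepsilon\to e^{-2\pi ik\beta_{s_\ell}}$, and that $f^{(\ell)}_\varepsilon\to f^{(\ell)}$ as $\varepsilon\to0$, where $f^{(\ell)}$ is a unit eigenvector of $\hat P_\beta=D_\beta\hat W_L$. Then for every $j\in\{1,\dots,N\}\setminus B_{s_\ell}$, with $s_j$ such that $j\in B_{s_j}$, $$\lim_{\varepsilon\to0}\frac{(f^{(\ell)}_\varepsilon)_j-(f^{(\ell)})_j}{\varepsilon}=\lim_{\varepsilon\to0}\frac{(f^{(\ell)}_\varepsilon)_j}{\varepsilon}=\frac{1}{e^{-2\pi ik\beta_{s_\ell}}-e^{-2\pi ik\beta_{s_j}}}\bigl(D_\beta\dot Wf^{(\ell)}\bigr)_j.$$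
   Context: A band-width vector is $L=(L_1,\dots,L_S)$ of positive integers with $\sum_sL_s=N$; $N_0=0$, $N_s=N_{s-1}+L_s$, $B_s=\{j:N_{s-1}<j\le N_s\}$. $D_{k,\beta,L}$ is the diagonal matrix with $j$-th entry $e^{-2\pi ik\beta_s}$ for $j\in B_s$. $\dot W$ is $L$-admissible if it is real symmetric and (1) $\dot W_{ij}\ge0$ for $i\ne j$, $\sum_j\dot W_{ij}=0$ for all $i$; (2) $\dot W$ has $N$ distinct eigenvalues; (3) each $\hat W_s=(\dot W_{jk})_{j,k\in B_s}$ has $L_s$ distinct eigenvalues. $\hat W_L$ is block diagonal with blocks $\hat W_1,\dots,\hat W_S$. $\Gamma=\{\beta\in\mathbb R^S: e^{-2\pi ik\beta_{s_1}}\neq e^{-2\pi ik\beta_{s_2}}\text{ for all }k\ne0,\ s_1\ne s_2\}$. For $v\in\mathbb C^N$, $(v)_j$ is its $j$-th entry. *)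

theory Defs
  imports "HOL-Analysis.Analysis"
begin

text \<open>Vectors in C^N are functions nat => complex, matrices are nat => nat => _,
  with indices ranging over {1..N} (entries outside are irrelevant).\<close>

definition bw_vector :: "nat \<Rightarrow> nat \<Rightarrow> (nat \<Rightarrow> nat) \<Rightarrow> bool" where
  "bw_vector S N L \<longleftrightarrow> (\<forall>s\<in>{1..S}. 0 < L s) \<and> (\<Sum>s=1..S. L s) = N"

definition Nacc :: "(nat \<Rightarrow> nat) \<Rightarrow> nat \<Rightarrow> nat" where
  "Nacc L s = (\<Sum>t=1..s. L t)"

definition block :: "(nat \<Rightarrow> nat) \<Rightarrow> nat \<Rightarrow> nat set" where
  "block L s = {j. Nacc L (s - 1) < j \<and> j \<le> Nacc L s}"

definition phase :: "nat \<Rightarrow> (nat \<Rightarrow> real) \<Rightarrow> nat \<Rightarrow> complex" where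
  "phase k \<beta> s = exp (- (2 * of_real pi * \<i> * of_nat k * of_real (\<beta> s)))"

definition Dmat :: "nat \<Rightarrow> nat \<Rightarrow> (nat \<Rightarrow> real) \<Rightarrow> (nat \<Rightarrow> nat) \<Rightarrow> nat \<Rightarrow> nat \<Rightarrow> complex" where
  "Dmat S k \<beta> L i j =
     (if i = j then (\<Sum>s=1..S. if j \<in> block L s then phase k \<beta> s else 0) else 0)"

definition mmul :: "nat \<Rightarrow> (nat \<Rightarrow> nat \<Rightarrow> complex) \<Rightarrow> (nat \<Rightarrow> nat \<Rightarrow> complex) \<Rightarrow> nat \<Rightarrow> nat \<Rightarrow> complex" where
  "mmul N A B i j = (\<Sum>l=1..N. A i l * B l j)"

definition mvec :: "nat \<Rightarrow> (nat \<Rightarrow> nat \<Rightarrow> complex) \<Rightarrow> (nat \<Rightarrow> complex) \<Rightarrow> nat \<Rightarrow> complex" where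
  "mvec N A v i = (\<Sum>j=1..N. A i j * v j)"

definition vnorm :: "nat \<Rightarrow> (nat \<Rightarrow> complex) \<Rightarrow> real" where
  "vnorm N v = sqrt (\<Sum>j=1..N. (cmod (v j))\<^sup>2)"

definition eigvals_on :: "nat set \<Rightarrow> (nat \<Rightarrow> nat \<Rightarrow> complex) \<Rightarrow> complex set" where
  "eigvals_on I A = {\<mu>. \<exists>v. (\<exists>i\<in>I. v i \<noteq> 0) \<and> (\<forall>i\<in>I. (\<Sum>j\<in>I. A i j * v j) = \<mu> * v i)}"

definition cmat :: "(nat \<Rightarrow> nat \<Rightarrow> real) \<Rightarrow> nat \<Rightarrow> nat \<Rightarrow> complex" where
  "cmat W i j = complex_of_real (W i j)"

definition admissible :: "nat \<Rightarrow> nat \<Rightarrow> (nat \<Rightarrow> nat) \<Rightarrow> (nat \<Rightarrow> nat \<Rightarrow> real) \<Rightarrow> bool" where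
  "admissible S N L W \<longleftrightarrow>
     (\<forall>i\<in>{1..N}. \<forall>j\<in>{1..N}. W i j = W j i) \<and>
     (\<forall>i\<in>{1..N}. \<forall>j\<in>{1..N}. i \<noteq> j \<longrightarrow> 0 \<le> W i j) \<and>
     (\<forall>i\<in>{1..N}. (\<Sum>j=1..N. W i j) = 0) \<and>
     card (eigvals_on {1..N} (cmat W)) = N \<and>
     (\<forall>s\<in>{1..S}. card (eigvals_on (block L s) (cmat W)) = L s)"

definition What :: "nat \<Rightarrow> (nat \<Rightarrow> nat) \<Rightarrow> (nat \<Rightarrow> nat \<Rightarrow> real) \<Rightarrow> nat \<Rightarrow> nat \<Rightarrow> real" where
  "What S L W i j = (if \<exists>s\<in>{1..S}. i \<in> block L s \<and> j \<in> block L s then W i j else 0)"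

definition Gamma :: "nat \<Rightarrow> (nat \<Rightarrow> real) set" where
  "Gamma S = {\<beta>. \<forall>k::int. \<forall>s1\<in>{1..S}. \<forall>s2\<in>{1..S}. k \<noteq> 0 \<and> s1 \<noteq> s2 \<longrightarrow>
      exp (- (2 * of_real pi * \<i> * of_int k * of_real (\<beta> s1)))
      \<noteq> exp (- (2 * of_real pi * \<i> * of_int k * of_real (\<beta> s2)))}"

definition Weps :: "(nat \<Rightarrow> nat \<Rightarrow> real) \<Rightarrow> real \<Rightarrow> nat \<Rightarrow> nat \<Rightarrow> complex" where
  "Weps W \<epsilon> i j = (if i = j then 1 else 0) + of_real \<epsilon> * of_real (W i j)"

definition Pmat :: "nat \<Rightarrow> nat \<Rightarrow> nat \<Rightarrow> (nat \<Rightarrow> real) \<Rightarrow> (nat \<Rightarrow> nat) \<Rightarrow> (nat \<Rightarrow> nat \<Rightarrow> real) \<Rightarrow> real \<Rightarrow> nat \<Rightarrow> nat \<Rightarrow> complex" where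
  "Pmat N S k \<beta> L W \<epsilon> = mmul N (Dmat S k \<beta> L) (Weps W \<epsilon>)"

definition Phat :: "nat \<Rightarrow> nat \<Rightarrow> nat \<Rightarrow> (nat \<Rightarrow> real) \<Rightarrow> (nat \<Rightarrow> nat) \<Rightarrow> (nat \<Rightarrow> nat \<Rightarrow> real) \<Rightarrow> nat \<Rightarrow> nat \<Rightarrow> complex" where
  "Phat N S k \<beta> L W = mmul N (Dmat S k \<beta> L) (cmat (What S L W))"

end

theory Submission
  imports Defs
begin

lemma mmul_D:
  assumes "j \<in> {1..N}"
  shows "mmul N (Dmat S k \<beta> L) B j i = Dmat S k \<beta> L j j * B j i"
proof -
  have "mmul N (Dmat S k \<beta> L) B j i = (\<Sum>l=1..N. if l = j then Dmat S k \<beta> L j j * B j i else 0)"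
    unfolding mmul_def by (rule sum.cong) (auto simp: Dmat_def)
  also have "\<dots> = Dmat S k \<beta> L j j * B j i" using assms by (simp add: sum.delta')
  finally show ?thesis .
qed

lemma mvec_D:
  assumes "j \<in> {1..N}"
  shows "mvec N (mmul N (Dmat S k \<beta> L) B) v j = Dmat S k \<beta> L j j * mvec N B v j"
  unfolding mvec_def using assms by (simp add: mmul_D sum_distrib_left mult.assoc)

lemma mvec_Weps:
  assumes "j \<in> {1..N}"
  shows "mvec N (Weps W e) v j = v j + of_real e * (\<Sum>i=1..N. of_real (W j i) * v i)"
proof -
  have "mvec N (Weps W e) v j = (\<Sum>i=1..N. (if i = j then v j else 0) + of_real e * (of_real (W j i) * v i))"
    unfolding mvec_def Weps_def by (rule sum.cong) (auto simp: algebra_simps)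
  also have "\<dots> = v j + of_real e * (\<Sum>i=1..N. of_real (W j i) * v i)"
    using assms by (simp add: sum.distrib sum.delta' sum_distrib_left)
  finally show ?thesis .
qed

lemma block_disj:
  assumes "j \<in> block L s" "j \<in> block L t" "1 \<le> s" "1 \<le> t"
  shows "s = t"
proof (rule ccontr)
  assume "s \<noteq> t"
  have mono: "Nacc L a \<le> Nacc L b" if "a \<le> b" for a b
    unfolding Nacc_def using that by (intro sum_mono2) auto
  show False
  proof (cases "s < t")
    case True
    then have "Nacc L s \<le> Nacc L (t - 1)" by (intro mono) auto
    then show False using assms unfolding block_def by auto
  next
    case False
    then have "Nacc L t \<le> Nacc L (s - 1)" using \<open>s \<noteq> t\<close> by (intro mono) auto
    then show False using assms unfolding block_def by auto
  qed
qed

lemma Dmat_diag: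
  assumes "j \<in> block L s" "s \<in> {1..S}"
  shows "Dmat S k \<beta> L j j = phase k \<beta> s"
proof -
  have "Dmat S k \<beta> L j j = (\<Sum>t=1..S. if t = s then phase k \<beta> s else 0)"
    unfolding Dmat_def if_P[OF refl]
  proof (rule sum.cong[OF refl])
    fix t assume t: "t \<in> {1..S}"
    show "(if j \<in> block L t then phase k \<beta> t else 0) = (if t = s then phase k \<beta> s else 0)"
    proof (cases "t = s")
      case False
      then have "j \<notin> block L t" using block_disj[of j L s t] assms t by auto
      then show ?thesis using False by simp
    qed (use assms in simp)
  qed
  also have "\<dots> = phase k \<beta> s" using assms by (simp add: sum.delta')
  finally show ?thesis .
qed

theorem proposition4p7:
  fixes N S k l sl j sj :: nat and L :: "nat \<Rightarrow> nat" and Wd :: "nat \<Rightarrow> nat \<Rightarrow> real"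
    and \<beta> :: "nat \<Rightarrow> real" and \<gamma> :: real
    and fe :: "real \<Rightarrow> nat \<Rightarrow> complex" and lam :: "real \<Rightarrow> complex" and f :: "nat \<Rightarrow> complex"
  assumes "1 < S" and "S \<le> N"
    and "bw_vector S N L"
    and "admissible S N L Wd"
    and "0 < k"
    and "\<beta> \<in> Gamma S"
    and "l \<in> {1..N}" and "sl \<in> {1..S}" and "l \<in> block L sl"
    and "0 < \<gamma>"
    and "\<forall>\<epsilon>. 0 < \<epsilon> \<and> \<epsilon> < \<gamma> \<longrightarrow> vnorm N (fe \<epsilon>) = 1 \<and>
           (\<forall>i\<in>{1..N}. mvec N (Pmat N S k \<beta> L Wd \<epsilon>) (fe \<epsilon>) i = lam \<epsilon> * fe \<epsilon> i)"
    and "(lam \<longlongrightarrow> phase k \<beta> sl) (at_right 0)"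
    and "\<forall>i\<in>{1..N}. ((\<lambda>\<epsilon>. fe \<epsilon> i) \<longlongrightarrow> f i) (at_right 0)"
    and "vnorm N f = 1"
    and "\<exists>\<mu>. \<forall>i\<in>{1..N}. mvec N (Phat N S k \<beta> L Wd) f i = \<mu> * f i"
    and "j \<in> {1..N}" and "j \<notin> block L sl" and "sj \<in> {1..S}" and "j \<in> block L sj"
  shows "((\<lambda>\<epsilon>. (fe \<epsilon> j - f j) / of_real \<epsilon>) \<longlongrightarrow>
            (1 / (phase k \<beta> sl - phase k \<beta> sj)) * mvec N (mmul N (Dmat S k \<beta> L) (cmat Wd)) f j)
           (at_right 0) \<and>
         ((\<lambda>\<epsilon>. fe \<epsilon> j / of_real \<epsilon>) \<longlongrightarrow>
            (1 / (phase k \<beta> sl - phase k \<beta> sj)) * mvec N (mmul N (Dmat S k \<beta> L) (cmat Wd)) f j)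
           (at_right 0)"
proof -
  note A = assms
  define d where "d = phase k \<beta> sj"
  define p where "p = phase k \<beta> sl"
  have dj: "Dmat S k \<beta> L j j = d" unfolding d_def using A(19,18) by (rule Dmat_diag)
  have "sl \<noteq> sj" using A(17,19) by auto
  then have pd: "p \<noteq> d"
  proof -
    have "\<forall>s1\<in>{1..S}. \<forall>s2\<in>{1..S}. int k \<noteq> 0 \<and> s1 \<noteq> s2 \<longrightarrow>
      exp (- (2 * of_real pi * \<i> * of_int (int k) * of_real (\<beta> s1)))
      \<noteq> exp (- (2 * of_real pi * \<i> * of_int (int k) * of_real (\<beta> s2)))"
      using A(6) unfolding Gamma_def by blast
    moreover have kn: "int k \<noteq> 0" using A(5) by simp
    ultimately have "exp (- (2 * of_real pi * \<i> * of_int (int k) * of_real (\<beta> sl)))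
      \<noteq> exp (- (2 * of_real pi * \<i> * of_int (int k) * of_real (\<beta> sj)))"
      using A(8) A(18) \<open>sl \<noteq> sj\<close> by blast
    then show ?thesis unfolding p_def d_def phase_def of_int_of_nat_eq .
  qed
  define wf where "wf e = (\<Sum>i=1..N. of_real (Wd j i) * fe e i)" for e
  define w0 where "w0 = (\<Sum>i=1..N. of_real (Wd j i) * f i)"
  have wf_lim: "(wf \<longlongrightarrow> w0) (at_right 0)"
    unfolding wf_def w0_def
  proof (rule tendsto_sum)
    fix i assume "i \<in> {1..N}"
    then show "((\<lambda>e. of_real (Wd j i) * fe e i) \<longlongrightarrow> of_real (Wd j i) * f i) (at_right 0)"
      using A(13) by (intro tendsto_mult[OF tendsto_const]) blast
  qed
  have target: "(1 / (p - d)) * mvec N (mmul N (Dmat S k \<beta> L) (cmat Wd)) f j = d * w0 / (p - d)"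
  proof -
    have "mvec N (mmul N (Dmat S k \<beta> L) (cmat Wd)) f j = d * mvec N (cmat Wd) f j"
      using A(16) by (simp only: mvec_D dj)
    also have "\<dots> = d * w0" by (simp add: mvec_def cmat_def w0_def)
    finally show ?thesis by simp
  qed
  have lim2: "((\<lambda>e. d * wf e / (lam e - d)) \<longlongrightarrow> d * w0 / (p - d)) (at_right 0)"
    by (rule tendsto_divide[OF tendsto_mult[OF tendsto_const wf_lim] tendsto_diff[OF A(12)[folded p_def] tendsto_const]])
       (use pd in simp)
  have ev_ne: "eventually (\<lambda>e. lam e \<noteq> d) (at_right 0)"
    using A(12) pd unfolding p_def[symmetric] by (simp add: tendsto_imp_eventually_ne)
  have ev_pos: "eventually (\<lambda>e. 0 < e \<and> e < \<gamma>) (at_right (0::real))"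
    unfolding eventually_at_right_field using A(10) by (intro exI[of _ \<gamma>]) auto
  have ev_eq: "eventually (\<lambda>e. d * wf e / (lam e - d) = fe e j / of_real e) (at_right 0)"
    using ev_ne ev_pos
  proof eventually_elim
    case (elim e)
    have "mvec N (Pmat N S k \<beta> L Wd e) (fe e) j = lam e * fe e j"
      using bspec[OF conjunct2[OF A(11)[rule_format, of e]] A(16)] elim by blast
    moreover have "mvec N (Pmat N S k \<beta> L Wd e) (fe e) j = d * (fe e j + of_real e * wf e)"
      unfolding Pmat_def mvec_D[OF A(16)] mvec_Weps[OF A(16)] dj wf_def by (rule refl)
    ultimately have "d * (fe e j + of_real e * wf e) = lam e * fe e j" by simp
    then have "fe e j * (lam e - d) = of_real e * (d * wf e)"
      by (simp only: algebra_simps)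
    moreover have "lam e - d \<noteq> 0" "(of_real e :: complex) \<noteq> 0" using elim by auto
    ultimately show ?case by (simp add: divide_simps)
  qed
  have L2: "((\<lambda>e. fe e j / of_real e) \<longlongrightarrow> d * w0 / (p - d)) (at_right 0)"
    using lim2 ev_eq by (rule Lim_transform_eventually)
  have of0: "((\<lambda>e. of_real e :: complex) \<longlongrightarrow> 0) (at_right (0::real))"
  proof -
    have "((\<lambda>e. of_real e :: complex) \<longlongrightarrow> of_real 0) (at_right (0::real))"
      by (intro tendsto_of_real tendsto_ident_at)
    then show ?thesis by (simp only: of_real_0)
  qed
  have "((\<lambda>e. of_real e * (fe e j / of_real e)) \<longlongrightarrow> 0 * (d * w0 / (p - d))) (at_right (0::real))"
    by (rule tendsto_mult[OF of0 L2])
  then have T0: "((\<lambda>e. of_real e * (fe e j / of_real e)) \<longlongrightarrow> 0) (at_right (0::real))"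
    by (simp only: mult_zero_left)
  have E0: "eventually (\<lambda>e. of_real e * (fe e j / of_real e) = fe e j) (at_right (0::real))"
    using ev_pos by eventually_elim simp
  have "((\<lambda>e. fe e j) \<longlongrightarrow> 0) (at_right 0)"
    by (rule Lim_transform_eventually[OF T0 E0])
  moreover have "((\<lambda>e. fe e j) \<longlongrightarrow> f j) (at_right 0)" using bspec[OF A(13) A(16)] .
  ultimately have fj: "f j = 0" using tendsto_unique[OF trivial_limit_at_right_real] by blast
  have L2': "((\<lambda>e. fe e j / of_real e) \<longlongrightarrow> (1 / (p - d)) * mvec N (mmul N (Dmat S k \<beta> L) (cmat Wd)) f j) (at_right 0)"
    using L2 unfolding target .
  note L3 = L2'[unfolded p_def d_def]
  show ?thesis unfolding fj diff_zero using L3 by blast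
qed

end
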